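(* Let $G$ be a compact Lie group with Lie algebra $\mathfrak g$ and bi-invariant metric $h_0$, and let $h$ be a left-invariant metric on $G$ with nonnegative sectional curvature. Then the unique inverse-linear path from $h_0$ to $h$ is infinitesimally nonnegative.
   Context: Write $\langle Z_1,Z_2\rangle=h_0(Z_1,Z_2)$ and $|Z|^2=\langle Z,Z\rangle$ for $Z_1,Z_2,Z\in\mathfrak g$. Every left-invariant metric $h$ on $G$ is determined by its restriction to $\mathfrak g$, and there is a unique $h_0$-self-adjoint positive definite endomorphism $\Phi\colon\mathfrak g\to\mathfrak g$ (the matrix of $h$) with $h(X,Y)=\langle \Phi X,Y\rangle$ for $X,Y\in\mathfrak g$. An inverse-linear path is a family $\Phi_t=(I-t\Psi)^{-1}$, where $\Psi\colon\mathfrak g\to\mathfrak g$ is $h_0$-self-adjoint; $h_t$ denotes the left-invariant metric with matrix $\Phi_t$, defined for $t$ in the open interval containing $0$ on which $I-t\Psi$ is positive definite. The unique inverse-linear path from $h_0$ to $h$ is the one with $\Phi_1=\Phi$, i.e. $\Psi=I-\Phi^{-1}$. For a left-invariant metric $h$ and $Z_1,Z_2\in\mathfrak g$, the unnormalized sectional curvature $k_h(Z_1,Z_2)=h(R_h(Z_1,Z_2)Z_2,Z_1)$ (not divided by $|Z_1\wedge Z_2|^2$); for $h_0$ it equals $\tfrac14|[Z_1,Z_2]|^2$. For fixed $X,Y\in\mathfrak g$, define $\kappa^\Psi(t)=k_{h_t}(\Phi_t^{-1}X,\Phi_t^{-1}Y)$ on the domain of $h_t$. The path (or $\Psi$) is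 infinitesimally nonnegative if for every $X,Y\in\mathfrak g$ there is $\varepsilon>0$ such that the associated function satisfies $\kappa^\Psi(t)\ge 0$ for all $t\in[0,\varepsilon)$. *)

theory Defs
  imports "HOL-Analysis.Analysis"
begin

text \<open>The Lie algebra g of a compact Lie group G is modelled as a finite-dimensional
real inner product space (type class euclidean_space); its inner product is the
bi-invariant metric h0.\<close>

definition compact_lie_algebra :: "('a::euclidean_space \<Rightarrow> 'a \<Rightarrow> 'a) \<Rightarrow> bool" where
  "compact_lie_algebra br \<longleftrightarrow>
     bilinear br \<and>
     (\<forall>x. br x x = 0) \<and>
     (\<forall>x y z. br x (br y z) + br y (br z x) + br z (br x y) = 0) \<and>
     (\<forall>x y z. br x y \<bullet> z = x \<bullet> br y z)"

text \<open>Matrix of a left-invariant metric: h0-self-adjoint positive definite endomorphism.\<close>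

definition metric_matrix :: "('a::euclidean_space \<Rightarrow> 'a) \<Rightarrow> bool" where
  "metric_matrix \<Phi> \<longleftrightarrow>
     linear \<Phi> \<and> (\<forall>x y. \<Phi> x \<bullet> y = x \<bullet> \<Phi> y) \<and> (\<forall>x. x \<noteq> 0 \<longrightarrow> \<Phi> x \<bullet> x > 0)"

text \<open>Levi-Civita connection of the left-invariant metric h(X,Y) = <Phi X, Y> on
left-invariant fields, via the Koszul formula.\<close>

definition lc_conn :: "('a::euclidean_space \<Rightarrow> 'a \<Rightarrow> 'a) \<Rightarrow> ('a \<Rightarrow> 'a) \<Rightarrow> 'a \<Rightarrow> 'a \<Rightarrow> 'a" where
  "lc_conn br \<Phi> X Y = (THE W. \<forall>Z. 2 * (\<Phi> W \<bullet> Z) =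
       \<Phi> (br X Y) \<bullet> Z - \<Phi> (br Y Z) \<bullet> X + \<Phi> (br Z X) \<bullet> Y)"

definition curv :: "('a::euclidean_space \<Rightarrow> 'a \<Rightarrow> 'a) \<Rightarrow> ('a \<Rightarrow> 'a) \<Rightarrow> 'a \<Rightarrow> 'a \<Rightarrow> 'a \<Rightarrow> 'a" where
  "curv br \<Phi> X Y Z = lc_conn br \<Phi> X (lc_conn br \<Phi> Y Z) - lc_conn br \<Phi> Y (lc_conn br \<Phi> X Z)
       - lc_conn br \<Phi> (br X Y) Z"

text \<open>Unnormalized sectional curvature k_h(X,Y) = h(R(X,Y)Y, X).\<close>

definition sec_k :: "('a::euclidean_space \<Rightarrow> 'a \<Rightarrow> 'a) \<Rightarrow> ('a \<Rightarrow> 'a) \<Rightarrow> 'a \<Rightarrow> 'a \<Rightarrow> real" where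
  "sec_k br \<Phi> X Y = \<Phi> (curv br \<Phi> X Y Y) \<bullet> X"

definition path_inv :: "('a::euclidean_space \<Rightarrow> 'a) \<Rightarrow> real \<Rightarrow> 'a \<Rightarrow> 'a" where
  "path_inv \<Psi> t = (\<lambda>v. v - t *\<^sub>R \<Psi> v)"

definition path_mat :: "('a::euclidean_space \<Rightarrow> 'a) \<Rightarrow> real \<Rightarrow> 'a \<Rightarrow> 'a" where
  "path_mat \<Psi> t = inv (path_inv \<Psi> t)"

definition kappa :: "('a::euclidean_space \<Rightarrow> 'a \<Rightarrow> 'a) \<Rightarrow> ('a \<Rightarrow> 'a) \<Rightarrow> 'a \<Rightarrow> 'a \<Rightarrow> real \<Rightarrow> real" where
  "kappa br \<Psi> X Y t = sec_k br (path_mat \<Psi> t) (path_inv \<Psi> t X) (path_inv \<Psi> t Y)"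

definition infinitesimally_nonneg :: "('a::euclidean_space \<Rightarrow> 'a \<Rightarrow> 'a) \<Rightarrow> ('a \<Rightarrow> 'a) \<Rightarrow> bool" where
  "infinitesimally_nonneg br \<Psi> \<longleftrightarrow>
     (\<forall>X Y. \<exists>\<epsilon>>0. \<forall>t. 0 \<le> t \<and> t < \<epsilon> \<longrightarrow>
        metric_matrix (path_inv \<Psi> t) \<and> 0 \<le> kappa br \<Psi> X Y t)"

text \<open>Psi of the unique inverse-linear path from h0 to the metric with matrix Phi.\<close>

definition psi_of :: "('a::euclidean_space \<Rightarrow> 'a) \<Rightarrow> 'a \<Rightarrow> 'a" where
  "psi_of \<Phi> = (\<lambda>v. v - inv \<Phi> v)"

end

theory Submission
  imports Defs
begin

definition ipair :: "('a::euclidean_space \<Rightarrow> 'a) \<Rightarrow> ('a \<Rightarrow> 'a) \<Rightarrow> bool" where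
  "ipair P \<Phi> \<longleftrightarrow> linear P \<and> linear \<Phi> \<and> (\<forall>v. \<Phi> (P v) = v) \<and> (\<forall>v. P (\<Phi> v) = v)
     \<and> (\<forall>x y. \<Phi> x \<bullet> y = x \<bullet> \<Phi> y)"

lemma mm_facts:
  fixes M :: "'a::euclidean_space \<Rightarrow> 'a"
  assumes "metric_matrix M"
  shows "ipair (inv M) M" "ipair M (inv M)" "\<And>z. inv M z \<bullet> z \<ge> 0"
proof -
  have lM: "linear M" and sa: "\<And>x y. M x \<bullet> y = x \<bullet> M y" and pos: "\<And>x. x \<noteq> 0 \<Longrightarrow> M x \<bullet> x > 0"
    using assms unfolding metric_matrix_def by auto
  have "inj M"
  proof (rule linear_injective_0[OF lM, THEN iffD2], intro allI impI)
    fix x assume "M x = 0" then show "x = 0" using pos[of x] by force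
  qed
  moreover then have "surj M" using eucl.linear_inj_imp_surj[OF lM] by blast
  ultimately have FI: "\<And>v. M (inv M v) = v" and IF: "\<And>v. inv M (M v) = v"
    by (auto simp: surj_f_inv_f inv_f_f)
  have lI: "linear (inv M)" using eucl.inj_linear_imp_inv_linear[OF lM \<open>inj M\<close>] .
  have saI: "inv M x \<bullet> y = x \<bullet> inv M y" for x y by (metis FI sa)
  show "ipair (inv M) M" "ipair M (inv M)" unfolding ipair_def using lM lI FI IF sa saI by auto
  show "inv M z \<bullet> z \<ge> 0" for z
  proof (cases "inv M z = 0")
    case True then show ?thesis by simp
  next
    case False
    have "inv M z \<bullet> z = M (inv M z) \<bullet> inv M z" by (simp add: FI inner_commute)
    then show ?thesis using pos[OF False] by simp
  qed
qed

locale cla =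
  fixes br :: "'a::euclidean_space \<Rightarrow> 'a \<Rightarrow> 'a"
  assumes cla: "compact_lie_algebra br"
begin

lemma lin_l: "linear (\<lambda>x. br x y)" and lin_r: "linear (br x)"
  using cla unfolding compact_lie_algebra_def bilinear_def by auto

lemma br_add_l[simp]: "br (a + b) c = br a c + br b c"
  using linear_add[OF lin_l] by blast
lemma br_add_r[simp]: "br c (a + b) = br c a + br c b"
  using linear_add[OF lin_r] by blast
lemma br_scale_l[simp]: "br (r *\<^sub>R a) c = r *\<^sub>R br a c"
  using linear_scale[OF lin_l] by blast
lemma br_scale_r[simp]: "br c (r *\<^sub>R a) = r *\<^sub>R br c a"
  using linear_scale[OF lin_r] by blast
lemma br_diff_l[simp]: "br (a - b) c = br a c - br b c"
  using linear_diff[OF lin_l] by blast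
lemma br_diff_r[simp]: "br c (a - b) = br c a - br c b"
  using linear_diff[OF lin_r] by blast
lemma br_neg_l[simp]: "br (- a) c = - br a c"
  using linear_neg[OF lin_l] by blast
lemma br_neg_r[simp]: "br c (- a) = - br c a"
  using linear_neg[OF lin_r] by blast
lemma br_0_l[simp]: "br 0 c = 0"
  using linear_0[OF lin_l] by blast
lemma br_0_r[simp]: "br c 0 = 0"
  using linear_0[OF lin_r] by blast
lemma br_self[simp]: "br x x = 0"
  using cla unfolding compact_lie_algebra_def by auto
lemma adinv: "br x y \<bullet> z = x \<bullet> br y z"
  using cla unfolding compact_lie_algebra_def by auto
lemma jacobi: "br x (br y z) + br y (br z x) + br z (br x y) = 0"
  using cla unfolding compact_lie_algebra_def by auto

lemma skew: "br y x = - br x y"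
proof -
  have e: "br (x + y) (x + y) = br x y + br y x" by (simp del: br_self) simp
  have "br x y + br y x = 0" using e by simp
  then show ?thesis by (simp add: eq_neg_iff_add_eq_0 add.commute)
qed

lemma cyc: "br a b \<bullet> c = br b c \<bullet> a"
  by (metis adinv inner_commute)

lemma tri0: "br a b \<bullet> a = 0"
  by (metis cyc br_self inner_zero_left)
lemma tri0': "br a b \<bullet> b = 0"
  by (metis adinv br_self inner_zero_right)

lemma jac_ip: "br X Y \<bullet> br A B = br A X \<bullet> br B Y + br X B \<bullet> br A Y"
proof -
  have j: "br Y (br A B) = - br A (br B Y) - br B (br Y A)"
    using jacobi[of Y A B] by (simp add: algebra_simps eq_neg_iff_add_eq_0)
  have "br X Y \<bullet> br A B = X \<bullet> br Y (br A B)" by (rule adinv)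
  also have "\<dots> = - (X \<bullet> br A (br B Y)) - X \<bullet> br B (br Y A)"
    by (simp add: j inner_diff_right)
  also have "X \<bullet> br A (br B Y) = br X A \<bullet> br B Y" by (simp add: adinv)
  also have "X \<bullet> br B (br Y A) = br X B \<bullet> br Y A" by (simp add: adinv)
  finally show ?thesis by (simp add: skew[of X A] skew[of Y A])
qed

lemma conn:
  assumes lP: "linear P" and lF: "linear \<Phi>" and FP: "\<And>v. \<Phi> (P v) = v" and PF: "\<And>v. P (\<Phi> v) = v"
    and sa: "\<And>x y. \<Phi> x \<bullet> y = x \<bullet> \<Phi> y"
  shows "lc_conn br \<Phi> a b = (1/2) *\<^sub>R (br a b + P (br a (\<Phi> b) + br b (\<Phi> a)))"
proof -
  define W0 where "W0 = (1/2) *\<^sub>R (br a b + P (br a (\<Phi> b) + br b (\<Phi> a)))"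
  have FW0: "\<Phi> W0 = (1/2) *\<^sub>R (\<Phi> (br a b) + (br a (\<Phi> b) + br b (\<Phi> a)))"
    unfolding W0_def by (simp add: linear_scale[OF lF] linear_add[OF lF] FP)
  have e1: "\<Phi> (br b Z) \<bullet> a = - (br b (\<Phi> a) \<bullet> Z)" for Z
  proof -
    have "\<Phi> (br b Z) \<bullet> a = br b Z \<bullet> \<Phi> a" by (rule sa)
    also have "\<dots> = b \<bullet> br Z (\<Phi> a)" by (rule adinv)
    also have "\<dots> = - (b \<bullet> br (\<Phi> a) Z)" by (simp add: skew[of Z])
    also have "\<dots> = - (br b (\<Phi> a) \<bullet> Z)" by (simp add: adinv)
    finally show ?thesis .
  qed
  have e2: "\<Phi> (br Z a) \<bullet> b = br a (\<Phi> b) \<bullet> Z" for Z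
  proof -
    have "\<Phi> (br Z a) \<bullet> b = br Z a \<bullet> \<Phi> b" by (rule sa)
    also have "\<dots> = Z \<bullet> br a (\<Phi> b)" by (rule adinv)
    finally show ?thesis by (simp add: inner_commute)
  qed
  have P0: "\<forall>Z. 2 * (\<Phi> W0 \<bullet> Z) = \<Phi> (br a b) \<bullet> Z - \<Phi> (br b Z) \<bullet> a + \<Phi> (br Z a) \<bullet> b"
    by (simp add: FW0 e1 e2 inner_add_left)
  have uniq: "W = W0" if "\<forall>Z. 2 * (\<Phi> W \<bullet> Z) = \<Phi> (br a b) \<bullet> Z - \<Phi> (br b Z) \<bullet> a + \<Phi> (br Z a) \<bullet> b" for W
  proof -
    have "\<forall>Z. (\<Phi> W - \<Phi> W0) \<bullet> Z = 0"
    proof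
      fix Z
      have "2 * (\<Phi> W \<bullet> Z) = 2 * (\<Phi> W0 \<bullet> Z)" using that P0 by metis
      then show "(\<Phi> W - \<Phi> W0) \<bullet> Z = 0" by (simp add: inner_diff_left)
    qed
    then have "\<Phi> W - \<Phi> W0 = 0" by (metis inner_eq_zero_iff)
    then have "P (\<Phi> W) = P (\<Phi> W0)" by simp
    then show ?thesis by (simp add: PF)
  qed
  show ?thesis unfolding lc_conn_def W0_def[symmetric]
    by (rule the_equality, rule P0, erule uniq)
qed


definition CF :: "('a \<Rightarrow> 'a) \<Rightarrow> ('a \<Rightarrow> 'a) \<Rightarrow> 'a \<Rightarrow> 'a \<Rightarrow> real" where
  "CF P \<Phi> X Y = (1/2) * ((br X (P Y) + br (P X) Y) \<bullet> br (P X) (P Y))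
     - (3/4) * (\<Phi> (br (P X) (P Y)) \<bullet> br (P X) (P Y))
     + (1/4) * ((br (P X) Y - br X (P Y)) \<bullet> P (br (P X) Y - br X (P Y)))
     - br (P X) X \<bullet> P (br (P Y) Y)"

lemma cyc2: "br a b \<bullet> c = - (br b a \<bullet> c)"
  by (simp add: skew[of a b])

lemma CF_sec:
  assumes ip: "ipair P \<Phi>"
  shows "sec_k br \<Phi> (P X) (P Y) = CF P \<Phi> X Y"
proof -
  have lP: "linear P" and lF: "linear \<Phi>" and FP: "\<And>v. \<Phi> (P v) = v" and PF: "\<And>v. P (\<Phi> v) = v"
    and sa: "\<And>x y. \<Phi> x \<bullet> y = x \<bullet> \<Phi> y" using ip unfolding ipair_def by auto
  have saP: "P x \<bullet> y = x \<bullet> P y" for x y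
    by (metis FP sa)
  note P_add = linear_add[OF lP] and P_scale = linear_scale[OF lP] and P_diff = linear_diff[OF lP]
  note F_add = linear_add[OF lF] and F_scale = linear_scale[OF lF] and F_diff = linear_diff[OF lF]
  define N where "N = lc_conn br \<Phi>"
  have Nf: "N a b = (1/2) *\<^sub>R (br a b + P (br a (\<Phi> b) + br b (\<Phi> a)))" for a b
    unfolding N_def by (rule conn[OF lP lF FP PF sa])
  define e where "e = br (P Y) Y"
  define u where "u = br X (P Y)"
  define v where "v = br (P X) Y"
  define W where "W = br (P X) (P Y)"
  define d where "d = v - u"
  have N1: "N (P Y) (P Y) = P e"
  proof -
    have "N (P Y) (P Y) = (1/2) *\<^sub>R P (e + e)" by (simp add: Nf FP e_def)
    also have "\<dots> = P e" by (simp add: P_add P_scale[symmetric] scaleR_2[symmetric])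
    finally show ?thesis .
  qed
  have t1: "br (P X) (P e) \<bullet> X = - (br (P X) X \<bullet> P e)"
  proof -
    have "br (P X) (P e) \<bullet> X = br (P e) X \<bullet> P X" by (rule cyc)
    also have "\<dots> = P e \<bullet> br X (P X)" by (rule adinv)
    also have "\<dots> = - (br (P X) X \<bullet> P e)" by (simp add: skew[of X] inner_commute)
    finally show ?thesis .
  qed
  have t2: "br (P e) X \<bullet> P X = - (br (P X) X \<bullet> P e)"
    using t1 cyc by metis
  have g1: "N (P X) (N (P Y) (P Y)) \<bullet> X = - (br (P X) X \<bullet> P e)"
  proof -
    have "N (P X) (N (P Y) (P Y)) \<bullet> X
        = (1/2) * (br (P X) (P e) \<bullet> X + (br (P X) e \<bullet> P X + br (P e) X \<bullet> P X))"
      unfolding N1 by (simp add: Nf FP inner_add_left saP)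
    also have "\<dots> = - (br (P X) X \<bullet> P e)" by (simp add: t1 t2 tri0)
    finally show ?thesis .
  qed
  have N2: "N (P X) (P Y) = (1/2) *\<^sub>R (W + P d)"
    by (simp add: Nf FP W_def d_def u_def v_def skew[of "P Y" X] P_diff)
  have FN2: "\<Phi> (N (P X) (P Y)) = (1/2) *\<^sub>R (\<Phi> W + d)"
    by (simp add: N2 F_scale F_add FP)
  have s1: "br (P Y) W \<bullet> X = W \<bullet> u"
    by (metis cyc adinv u_def)
  have s2: "br (P Y) (P d) \<bullet> X = P d \<bullet> u"
    by (metis cyc adinv u_def)
  have s3: "br (P Y) (\<Phi> W) \<bullet> P X = \<Phi> W \<bullet> W"
    by (metis cyc adinv W_def)
  have s4: "br (P Y) d \<bullet> P X = d \<bullet> W"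
    by (metis cyc adinv W_def)
  have s5: "br W Y \<bullet> P X = - (W \<bullet> v)"
    by (metis adinv cyc2 v_def inner_minus_right skew)
  have s6: "br (P d) Y \<bullet> P X = - (P d \<bullet> v)"
    by (metis adinv cyc2 v_def inner_minus_right skew)
  have s7: "br W (P Y) \<bullet> X = - (W \<bullet> u)"
    by (metis adinv cyc2 u_def inner_minus_right skew)
  have g2: "N (P Y) (N (P X) (P Y)) \<bullet> X = (1/4) * (\<Phi> W \<bullet> W - P d \<bullet> d)"
  proof -
    have "N (P Y) (N (P X) (P Y)) \<bullet> X = (1/2) * (br (P Y) (N (P X) (P Y)) \<bullet> X
       + br (P Y) (\<Phi> (N (P X) (P Y))) \<bullet> P X + br (N (P X) (P Y)) Y \<bullet> P X)"
      by (simp add: Nf FP inner_add_left saP)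
    also have "\<dots> = (1/4) * (br (P Y) W \<bullet> X + br (P Y) (P d) \<bullet> X + br (P Y) (\<Phi> W) \<bullet> P X
       + br (P Y) d \<bullet> P X + br W Y \<bullet> P X + br (P d) Y \<bullet> P X)"
      unfolding FN2 by (simp add: N2 inner_add_left algebra_simps)
    also have "\<dots> = (1/4) * (W \<bullet> u + P d \<bullet> u + \<Phi> W \<bullet> W + d \<bullet> W - W \<bullet> v - P d \<bullet> v)"
      by (simp add: s1 s2 s3 s4 s5 s6)
    also have "\<dots> = (1/4) * (\<Phi> W \<bullet> W - P d \<bullet> d)"
      by (simp add: d_def inner_diff_left inner_diff_right inner_commute algebra_simps)
    finally show ?thesis .
  qed
  have g3: "N (br (P X) (P Y)) (P Y) \<bullet> X = (1/2) * (\<Phi> W \<bullet> W - W \<bullet> u - W \<bullet> v)"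
  proof -
    have "N (br (P X) (P Y)) (P Y) \<bullet> X = (1/2) * (br W (P Y) \<bullet> X + br W Y \<bullet> P X + br (P Y) (\<Phi> W) \<bullet> P X)"
      by (simp add: Nf FP inner_add_left saP W_def)
    also have "\<dots> = (1/2) * (\<Phi> W \<bullet> W - W \<bullet> u - W \<bullet> v)"
      by (simp add: s3 s5 s7)
    finally show ?thesis .
  qed
  have "sec_k br \<Phi> (P X) (P Y) = curv br \<Phi> (P X) (P Y) (P Y) \<bullet> X"
    unfolding sec_k_def by (simp add: sa FP)
  also have "\<dots> = N (P X) (N (P Y) (P Y)) \<bullet> X - N (P Y) (N (P X) (P Y)) \<bullet> X - N (br (P X) (P Y)) (P Y) \<bullet> X"
    unfolding curv_def N_def by (simp add: inner_diff_left)
  also have "\<dots> = - (br (P X) X \<bullet> P e) - (1/4) * (\<Phi> W \<bullet> W - P d \<bullet> d) - (1/2) * (\<Phi> W \<bullet> W - W \<bullet> u - W \<bullet> v)"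
    by (simp only: g1 g2 g3)
  also have "\<dots> = CF P \<Phi> X Y"
    unfolding CF_def by (simp add: W_def[symmetric] u_def[symmetric] v_def[symmetric] e_def[symmetric]
        d_def[symmetric] inner_add_left inner_commute saP algebra_simps)
  finally show ?thesis .
qed

lemma parallel:
  assumes ip1: "ipair P1 \<Phi>1" and ip2: "ipair P' \<Phi>'" and P'e: "\<And>v. P' v = P1 v + s *\<^sub>R v"
    and s: "s > 0" and pos: "\<And>z. \<Phi>1 z \<bullet> z \<ge> 0"
  shows "\<Phi>' (w1 + w2) \<bullet> (w1 + w2) \<le> \<Phi>1 w1 \<bullet> w1 + (1/s) * (w2 \<bullet> w2)"
proof -
  have lP: "linear P1" and lF: "linear \<Phi>1" and FP: "\<And>v. \<Phi>1 (P1 v) = v"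
    and sa: "\<And>x y. \<Phi>1 x \<bullet> y = x \<bullet> \<Phi>1 y" using ip1 unfolding ipair_def by auto
  have PF': "\<And>v. P' (\<Phi>' v) = v" using ip2 unfolding ipair_def by auto
  define \<xi> where "\<xi> = \<Phi>' (w1 + w2)"
  have xi: "P1 \<xi> + s *\<^sub>R \<xi> = w1 + w2" using PF'[of "w1+w2"] P'e[of \<xi>] unfolding \<xi>_def by simp
  have a1: "0 \<le> \<Phi>1 (w1 - P1 \<xi>) \<bullet> (w1 - P1 \<xi>)" by (rule pos)
  also have "\<dots> = \<Phi>1 w1 \<bullet> w1 - 2 * (w1 \<bullet> \<xi>) + P1 \<xi> \<bullet> \<xi>"
    using sa[of "P1 \<xi>" w1] FP[of \<xi>]
    by (simp add: linear_diff[OF lF] FP inner_diff_left inner_diff_right sa inner_commute)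
  finally have a1: "0 \<le> \<Phi>1 w1 \<bullet> w1 - 2 * (w1 \<bullet> \<xi>) + P1 \<xi> \<bullet> \<xi>" .
  have "0 \<le> (1/s) * ((w2 - s *\<^sub>R \<xi>) \<bullet> (w2 - s *\<^sub>R \<xi>))" using s by simp
  also have "\<dots> = (1/s) * (w2 \<bullet> w2) - 2 * (w2 \<bullet> \<xi>) + s * (\<xi> \<bullet> \<xi>)"
    using s by (simp add: inner_diff_left inner_diff_right inner_commute algebra_simps power2_eq_square)
  finally have a2: "0 \<le> (1/s) * (w2 \<bullet> w2) - 2 * (w2 \<bullet> \<xi>) + s * (\<xi> \<bullet> \<xi>)" .
  have "(w1 + w2) \<bullet> \<xi> = P1 \<xi> \<bullet> \<xi> + s * (\<xi> \<bullet> \<xi>)"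
    by (simp add: xi[symmetric] inner_add_left)
  then have "\<Phi>' (w1 + w2) \<bullet> (w1 + w2) = P1 \<xi> \<bullet> \<xi> + s * (\<xi> \<bullet> \<xi>)"
    unfolding \<xi>_def[symmetric] by (simp add: inner_commute)
  moreover have "(w1 + w2) \<bullet> \<xi> = w1 \<bullet> \<xi> + w2 \<bullet> \<xi>" by (simp add: inner_add_left)
  ultimately show ?thesis using a1 a2 \<open>(w1 + w2) \<bullet> \<xi> = P1 \<xi> \<bullet> \<xi> + s * (\<xi> \<bullet> \<xi>)\<close> by linarith
qed

lemma CF_super:
  assumes ip1: "ipair P1 \<Phi>1" and ip2: "ipair P' \<Phi>'" and P'e: "\<And>v. P' v = P1 v + s *\<^sub>R v"
    and s: "s > 0" and pos: "\<And>z. \<Phi>1 z \<bullet> z \<ge> 0"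
  shows "CF P' \<Phi>' X Y \<ge> CF P1 \<Phi>1 X Y"
proof -
  have lP: "linear P1" using ip1 unfolding ipair_def by auto
  define u where "u = br X (P1 Y)"
  define v where "v = br (P1 X) Y"
  define W where "W = br (P1 X) (P1 Y)"
  define c where "c = br X Y"
  define f where "f = br (P1 X) X"
  define e where "e = br (P1 Y) Y"
  define d where "d = v - u"
  define b where "b = u + v"
  have jac: "c \<bullet> W = f \<bullet> e + u \<bullet> v"
    unfolding c_def W_def f_def e_def u_def v_def by (rule jac_ip)
  have W': "br (P' X) (P' Y) = W + s *\<^sub>R (b + s *\<^sub>R c)"
    by (simp add: P'e W_def b_def u_def v_def c_def algebra_simps)
  have u': "br X (P' Y) = u + s *\<^sub>R c" by (simp add: P'e u_def c_def)
  have v': "br (P' X) Y = v + s *\<^sub>R c" by (simp add: P'e v_def c_def)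
  have d': "br (P' X) Y - br X (P' Y) = d" by (simp add: u' v' d_def)
  have f': "br (P' X) X = f" by (simp add: P'e f_def)
  have e': "P' (br (P' Y) Y) = P1 e + s *\<^sub>R e" by (simp add: P'e e_def linear_add[OF lP] linear_scale[OF lP])
  have Pd: "P' d = P1 d + s *\<^sub>R d" by (rule P'e)
  have par: "\<Phi>' (W + s *\<^sub>R (b + s *\<^sub>R c)) \<bullet> (W + s *\<^sub>R (b + s *\<^sub>R c))
      \<le> \<Phi>1 W \<bullet> W + (1/s) * ((s *\<^sub>R (b + s *\<^sub>R c)) \<bullet> (s *\<^sub>R (b + s *\<^sub>R c)))"
    by (rule parallel[OF ip1 ip2 P'e s pos])
  have par2: "(1/s) * ((s *\<^sub>R (b + s *\<^sub>R c)) \<bullet> (s *\<^sub>R (b + s *\<^sub>R c)))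
     = s * (b \<bullet> b) + 2 * s^2 * (b \<bullet> c) + s^3 * (c \<bullet> c)"
    using s by (simp add: inner_add_left inner_add_right inner_commute algebra_simps power2_eq_square power3_eq_cube)
  have CF': "CF P' \<Phi>' X Y = (1/2) * ((b + (2 * s) *\<^sub>R c) \<bullet> (W + s *\<^sub>R (b + s *\<^sub>R c)))
     - (3/4) * (\<Phi>' (W + s *\<^sub>R (b + s *\<^sub>R c)) \<bullet> (W + s *\<^sub>R (b + s *\<^sub>R c)))
     + (1/4) * (d \<bullet> (P1 d + s *\<^sub>R d)) - f \<bullet> (P1 e + s *\<^sub>R e)"
    unfolding CF_def W'[symmetric] d' f' e' Pd[symmetric]
    by (simp add: u' v' b_def algebra_simps scaleR_2[symmetric])
  have CF1: "CF P1 \<Phi>1 X Y = (1/2) * (b \<bullet> W) - (3/4) * (\<Phi>1 W \<bullet> W) + (1/4) * (d \<bullet> P1 d) - f \<bullet> P1 e"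
    unfolding CF_def by (simp add: u_def[symmetric] v_def[symmetric] W_def[symmetric] b_def
      d_def[symmetric] f_def[symmetric] e_def[symmetric])
  have bd: "b \<bullet> b - d \<bullet> d = 4 * (u \<bullet> v)"
    by (simp add: b_def d_def inner_add_left inner_add_right inner_diff_left inner_diff_right inner_commute)
  have exp: "(1/2) * ((b + (2 * s) *\<^sub>R c) \<bullet> (W + s *\<^sub>R (b + s *\<^sub>R c)))
      = (1/2) * (b \<bullet> W) + (1/2) * s * (b \<bullet> b) + (3/2) * s^2 * (b \<bullet> c) + s * (c \<bullet> W) + s^3 * (c \<bullet> c)"
    by (simp add: inner_add_left inner_add_right inner_commute algebra_simps power2_eq_square power3_eq_cube)
  have exp2: "d \<bullet> (P1 d + s *\<^sub>R d) = d \<bullet> P1 d + s * (d \<bullet> d)" by (simp add: inner_add_right)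
  have exp3: "f \<bullet> (P1 e + s *\<^sub>R e) = f \<bullet> P1 e + s * (f \<bullet> e)" by (simp add: inner_add_right)
  have cc: "c \<bullet> c \<ge> 0" by simp
  have "CF P' \<Phi>' X Y - CF P1 \<Phi>1 X Y \<ge> (1/4) * s^3 * (c \<bullet> c)"
    unfolding CF' CF1 exp exp2 exp3 using par par2 jac bd s
    by (simp add: algebra_simps)
  moreover have "(1/4) * s^3 * (c \<bullet> c) \<ge> 0" using s cc by simp
  ultimately show ?thesis by linarith
qed

lemma CF_scale:
  assumes lP: "linear P" and lF: "linear \<Phi>" and t: "t \<noteq> 0"
  shows "CF (\<lambda>v. t *\<^sub>R P v) (\<lambda>v. (1/t) *\<^sub>R \<Phi> v) X Y = t^3 * CF P \<Phi> X Y"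
  unfolding CF_def using t
  by (simp add: linear_scale[OF lP] linear_scale[OF lF] linear_diff[OF lP] algebra_simps power2_eq_square power3_eq_cube)

lemma CF_id: "CF (\<lambda>v. v) (\<lambda>v. v) X Y = (1/4) * (br X Y \<bullet> br X Y)"
  unfolding CF_def by (simp add: scaleR_2[symmetric])

end

theorem mainTheorem1:
  fixes br :: "'a::euclidean_space \<Rightarrow> 'a \<Rightarrow> 'a" and \<Phi> :: "'a \<Rightarrow> 'a"
  assumes "compact_lie_algebra br"
    and "metric_matrix \<Phi>"
    and "\<forall>X Y. 0 \<le> sec_k br \<Phi> X Y"
  shows "infinitesimally_nonneg br (psi_of \<Phi>)"
proof -
  interpret cla br by (rule cla.intro) (rule assms(1))
  define Pi where "Pi = inv \<Phi>"
  have ipF: "ipair Pi \<Phi>" and posPi: "\<And>z. Pi z \<bullet> z \<ge> 0"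
    using mm_facts[OF assms(2)] unfolding Pi_def by auto
  have lPi: "linear Pi" and lF: "linear \<Phi>" and FPi: "\<And>v. \<Phi> (Pi v) = v"
    and saF: "\<And>x y. \<Phi> x \<bullet> y = x \<bullet> \<Phi> y" and saPi: "\<And>x y. Pi x \<bullet> y = x \<bullet> Pi y"
    using ipF unfolding ipair_def by (auto, metis)
  have posF: "\<Phi> z \<bullet> z \<ge> 0" for z
    using assms(2) unfolding metric_matrix_def by (cases "z = 0") (auto intro: less_imp_le)
  have CFPi: "CF Pi \<Phi> X Y \<ge> 0" for X Y
    using assms(3) CF_sec[OF ipF, of X Y] by metis
  have Pt: "path_inv (psi_of \<Phi>) t v = t *\<^sub>R Pi v + (1 - t) *\<^sub>R v" for t v
    unfolding path_inv_def psi_of_def Pi_def by (simp add: algebra_simps)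
  have mm: "metric_matrix (path_inv (psi_of \<Phi>) t)" if t: "0 \<le> t" "t < 1" for t
    unfolding metric_matrix_def
  proof (intro conjI allI impI)
    show "linear (path_inv (psi_of \<Phi>) t)"
      unfolding Pt by (intro linearI) (simp_all add: linear_add[OF lPi] linear_scale[OF lPi] algebra_simps)
    show "path_inv (psi_of \<Phi>) t x \<bullet> y = x \<bullet> path_inv (psi_of \<Phi>) t y" for x y
      unfolding Pt by (simp add: inner_add_left inner_add_right saPi)
    show "path_inv (psi_of \<Phi>) t x \<bullet> x > 0" if "x \<noteq> 0" for x
    proof -
      have "path_inv (psi_of \<Phi>) t x \<bullet> x = t * (Pi x \<bullet> x) + (1 - t) * (x \<bullet> x)"
        unfolding Pt by (simp add: inner_add_left)
      moreover have "t * (Pi x \<bullet> x) \<ge> 0" using t posPi by simp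
      moreover have "(1 - t) * (x \<bullet> x) > 0" using t that by simp
      ultimately show ?thesis by linarith
    qed
  qed
  have key: "0 \<le> kappa br (psi_of \<Phi>) X Y t" if t: "0 \<le> t" "t < 1" for X Y t
  proof -
    define P where "P = path_inv (psi_of \<Phi>) t"
    define F where "F = path_mat (psi_of \<Phi>) t"
    have ipt: "ipair P F" using mm_facts(2)[OF mm[OF t]] unfolding P_def F_def path_mat_def .
    have kap: "kappa br (psi_of \<Phi>) X Y t = CF P F X Y"
      unfolding kappa_def P_def[symmetric] F_def[symmetric] by (rule CF_sec[OF ipt])
    show ?thesis
    proof (cases "t = 0")
      case True
      have P0: "P = (\<lambda>v. v)" unfolding P_def using Pt True by auto
      have F0: "F = (\<lambda>v. v)"
      proof
        fix v
        have "F (P v) = v" using ipt unfolding ipair_def by auto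
        then show "F v = v" by (simp add: P0)
      qed
      show ?thesis unfolding kap P0 F0 CF_id by simp
    next
      case False
      then have t0: "0 < t" using t by simp
      define P1 where "P1 = (\<lambda>v. t *\<^sub>R Pi v)"
      define F1 where "F1 = (\<lambda>v. (1/t) *\<^sub>R \<Phi> v)"
      have l1: "linear P1" unfolding P1_def
        by (intro linearI) (simp_all add: linear_add[OF lPi] linear_scale[OF lPi] algebra_simps)
      have l2: "linear F1" unfolding F1_def
        by (intro linearI) (simp_all add: linear_add[OF lF] linear_scale[OF lF] algebra_simps)
      have PiF: "\<And>v. Pi (\<Phi> v) = v" using ipF unfolding ipair_def by auto
      have ip1: "ipair P1 F1" unfolding ipair_def using l1 l2 t0
        by (simp add: P1_def F1_def linear_scale[OF lF] linear_scale[OF lPi] FPi PiF saF)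
      have pos1: "F1 z \<bullet> z \<ge> 0" for z unfolding F1_def using t0 posF[of z] by simp
      have Pe: "P v = P1 v + (1 - t) *\<^sub>R v" for v unfolding P_def P1_def by (rule Pt)
      have "CF P F X Y \<ge> CF P1 F1 X Y" by (rule CF_super[OF ip1 ipt Pe _ pos1]) (use t in simp)
      moreover have "CF P1 F1 X Y = t^3 * CF Pi \<Phi> X Y"
        unfolding P1_def F1_def by (rule CF_scale[OF lPi lF]) (use t0 in simp)
      moreover have "t^3 * CF Pi \<Phi> X Y \<ge> 0" using CFPi t0 by simp
      ultimately show ?thesis unfolding kap by linarith
    qed
  qed
  show ?thesis
    unfolding infinitesimally_nonneg_def
  proof (intro allI)
    fix X Y
    show "\<exists>\<epsilon>>0. \<forall>t. 0 \<le> t \<and> t < \<epsilon> \<longrightarrow>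
        metric_matrix (path_inv (psi_of \<Phi>) t) \<and> 0 \<le> kappa br (psi_of \<Phi>) X Y t"
      by (rule exI[of _ 1]) (use mm key in auto)
  qed
qed

end
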